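(* Let $\pi\ge1$. For every input $\sigma=(g_1,\dots,g_T)\in\Sigma$, the outputs $\bar v_t$ of CR-Pursuit($\pi$) satisfy $$\sum_{t=1}^T\frac{g_t(\bar v_t)}{p(t)}\ \le\ \frac{\Delta}{\pi}\,(\ln\theta+1),$$ where $p(t)=g_t'(0)$ and $\theta=M/m$.
   Context: Fix $\Delta>0$ and $0<m\le M$, $\theta=M/m$. Let $\mathcal G$ be the family of all functions $g:[0,\Delta]\to\mathbb{R}$ that are concave, increasing and differentiable on $[0,\Delta]$ with $g(0)=0$ and $g'(0)\in[m,M]$. An input is a finite sequence $\sigma=(g_1,\dots,g_T)$, $T\ge1$, $g_t\in\mathcal G$; $\Sigma$ is the set of all inputs; $\sigma^{[1:t]}=(g_1,\dots,g_t)$ ($\sigma^{[1:0]}$ empty). $\eta_{OPT}(\sigma^{[1:t]})$ is the optimal value of $\max\sum_{s=1}^t g_s(v_s)$ s.t. $\sum_{s=1}^t v_s\le\Delta$, $v_s\ge0$ (and $0$ for the empty sequence). For $\pi\ge1$, CR-Pursuit($\pi$) outputs at time $t$ the smallest $\bar v_t\in[0,\Delta]$ with $g_t(\bar v_t)=\frac1\pi\big[\eta_{OPT}(\sigma^{[1:t]})-\eta_{OPT}(\sigma^{[1:t-1]})\big]$. *)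

theory Defs
  imports "HOL-Analysis.Analysis"
begin

definition in_G :: "real \<Rightarrow> real \<Rightarrow> real \<Rightarrow> (real \<Rightarrow> real) \<Rightarrow> bool" where
  "in_G \<Delta> m M g \<longleftrightarrow>
     concave_on {0..\<Delta>} g \<and> mono_on {0..\<Delta>} g \<and> g differentiable_on {0..\<Delta>} \<and>
     g 0 = 0 \<and>
     (\<exists>d. (g has_real_derivative d) (at 0 within {0..\<Delta>}) \<and> m \<le> d \<and> d \<le> M)"

text \<open>Offline optimum for the prefix g_1..g_t (equals 0 for t = 0).\<close>
definition eta_OPT :: "real \<Rightarrow> (nat \<Rightarrow> real \<Rightarrow> real) \<Rightarrow> nat \<Rightarrow> real" where
  "eta_OPT \<Delta> g t = Sup {(\<Sum>s=1..t. g s (v s)) | v :: nat \<Rightarrow> real.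
       (\<forall>s\<in>{1..t}. 0 \<le> v s) \<and> (\<Sum>s=1..t. v s) \<le> \<Delta>}"

definition cr_pursuit :: "real \<Rightarrow> real \<Rightarrow> (nat \<Rightarrow> real \<Rightarrow> real) \<Rightarrow> nat \<Rightarrow> real" where
  "cr_pursuit \<Delta> \<pi> g t = Inf {v \<in> {0..\<Delta>}.
       g t v = (eta_OPT \<Delta> g t - eta_OPT \<Delta> g (t - 1)) / \<pi>}"

end

theory Submission
  imports Defs
begin

definition feas :: "nat set \<Rightarrow> real \<Rightarrow> (nat \<Rightarrow> real) \<Rightarrow> bool" where
  "feas S \<Delta> v \<longleftrightarrow> (\<forall>s\<in>S. 0 \<le> v s) \<and> (\<Sum>s\<in>S. v s) \<le> \<Delta>"

definition val :: "nat set \<Rightarrow> (nat \<Rightarrow> real \<Rightarrow> real) \<Rightarrow> real \<Rightarrow> real \<Rightarrow> (nat \<Rightarrow> real) \<Rightarrow> real" where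
  "val S f c \<Delta> v = (\<Sum>s\<in>S. f s (v s)) + c * (\<Delta> - (\<Sum>s\<in>S. v s))"

definition opt :: "nat set \<Rightarrow> (nat \<Rightarrow> real \<Rightarrow> real) \<Rightarrow> real \<Rightarrow> real \<Rightarrow> real" where
  "opt S f c \<Delta> = Sup (val S f c \<Delta> ` {v. feas S \<Delta> v})"

lemma eta_opt: "eta_OPT \<Delta> g t = opt {1..t} g 0 \<Delta>"
  unfolding eta_OPT_def opt_def val_def feas_def
  by (simp add: setcompr_eq_image)

lemma feas_le: "finite S \<Longrightarrow> feas S \<Delta> v \<Longrightarrow> s \<in> S \<Longrightarrow> v s \<le> \<Delta>"
proof -
  assume a: "finite S" "feas S \<Delta> v" "s \<in> S"
  have "v s \<le> sum v S" using a unfolding feas_def by (intro member_le_sum) auto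
  then show ?thesis using a unfolding feas_def by linarith
qed

lemma val_bdd:
  assumes "finite S" "\<forall>s\<in>S. mono_on {0..\<Delta>} (f s)" "c \<ge> 0"
  shows "bdd_above (val S f c \<Delta> ` {v. feas S \<Delta> v})"
proof (rule bdd_aboveI2)
  fix v assume v: "v \<in> {v. feas S \<Delta> v}"
  have "(\<Sum>s\<in>S. f s (v s)) \<le> (\<Sum>s\<in>S. f s \<Delta>)"
  proof (rule sum_mono)
    fix s assume "s \<in> S"
    then show "f s (v s) \<le> f s \<Delta>" using assms v feas_le[of S \<Delta> v s]
      unfolding feas_def mono_on_def by auto
  qed
  moreover have "c * (\<Delta> - (\<Sum>s\<in>S. v s)) \<le> c * \<Delta>"
    using v assms(3) unfolding feas_def by (simp add: mult_left_mono sum_nonneg)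
  ultimately show "val S f c \<Delta> v \<le> (\<Sum>s\<in>S. f s \<Delta>) + c * \<Delta>"
    unfolding val_def by linarith
qed

lemma opt_ge:
  assumes "finite S" "\<forall>s\<in>S. mono_on {0..\<Delta>} (f s)" "c \<ge> 0" "feas S \<Delta> v"
  shows "val S f c \<Delta> v \<le> opt S f c \<Delta>"
  unfolding opt_def using assms val_bdd by (intro cSup_upper) auto

lemma opt_le:
  assumes "\<Delta> \<ge> 0" "\<And>v. feas S \<Delta> v \<Longrightarrow> val S f c \<Delta> v \<le> C"
  shows "opt S f c \<Delta> \<le> C"
proof -
  have "feas S \<Delta> (\<lambda>_. 0)" using assms unfolding feas_def by auto
  then show ?thesis unfolding opt_def using assms by (intro cSup_least) auto
qed


lemma conc_pair0:
  fixes h :: "real \<Rightarrow> real" and x z \<theta> \<Delta> :: real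
  assumes "concave_on {0..\<Delta>} h" "0 \<le> x" "x \<le> z" "z \<le> \<Delta>" "0 \<le> \<theta>" "\<theta> \<le> 1"
  shows "h x + h z \<le> h (x + \<theta> * (z - x)) + h (z - \<theta> * (z - x))"
proof -
  have i1: "h ((1 - \<theta>) *\<^sub>R x + \<theta> *\<^sub>R z) \<ge> (1 - \<theta>) * h x + \<theta> * h z"
    by (rule concave_onD[OF assms(1)]) (use assms in auto)
  have i2: "h ((1 - (1-\<theta>)) *\<^sub>R x + (1-\<theta>) *\<^sub>R z) \<ge> (1 - (1-\<theta>)) * h x + (1-\<theta>) * h z"
    by (rule concave_onD[OF assms(1)]) (use assms in auto)
  have e1: "(1 - \<theta>) *\<^sub>R x + \<theta> *\<^sub>R z = x + \<theta> * (z - x)" by (simp add: algebra_simps)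
  have e2: "(1 - (1-\<theta>)) *\<^sub>R x + (1-\<theta>) *\<^sub>R z = z - \<theta> * (z - x)" by (simp add: algebra_simps)
  show ?thesis using i1 i2 unfolding e1 e2 by (simp add: algebra_simps)
qed

lemma conc_pair:
  fixes h :: "real \<Rightarrow> real" and x z \<theta> \<Delta> :: real
  assumes "concave_on {0..\<Delta>} h" "0 \<le> x" "x \<le> \<Delta>" "0 \<le> z" "z \<le> \<Delta>" "0 \<le> \<theta>" "\<theta> \<le> 1"
  shows "h x + h z \<le> h (min x z + \<theta> * (max x z - min x z)) + h (x + z - (min x z + \<theta> * (max x z - min x z)))"
proof (cases "x \<le> z")
  case True
  have "x + z - (x + \<theta> * (z - x)) = z - \<theta> * (z - x)" by simp
  then show ?thesis using True conc_pair0[of \<Delta> h x z \<theta>] assms by (simp add: min_def max_def)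
next
  case False
  have "x + z - (z + \<theta> * (x - z)) = x - \<theta> * (x - z)" by simp
  then show ?thesis using False conc_pair0[of \<Delta> h z x \<theta>] assms by (simp add: min_def max_def add.commute)
qed

lemma exch_pt:
  assumes fin: "finite B" and AB: "A \<subseteq> B" and tB: "t \<notin> B" and y: "y \<ge> 0"
    and conc: "\<forall>s\<in>A. concave_on {0..\<Delta>} (f s)"
    and slope: "\<forall>j\<in>B-A. \<forall>a b. 0 \<le> a \<longrightarrow> a \<le> b \<longrightarrow> b \<le> \<Delta> \<longrightarrow> f j b - f j a \<le> y*(b-a)"
    and fu: "feas (insert t A) \<Delta> u" and fv: "feas B \<Delta> v"
  shows "\<exists>b w. feas A \<Delta> b \<and> feas (insert t B) \<Delta> w \<and>
     val (insert t A) f y \<Delta> u + val B f 0 \<Delta> v \<le> val A f y \<Delta> b + val (insert t B) f 0 \<Delta> w"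
proof -
  have finA: "finite A" using fin AB finite_subset by blast
  have tA: "t \<notin> A" using tB AB by blast
  define mn where "mn s = min (u s) (v s)" for s
  define mx where "mx s = max (u s) (v s)" for s
  define L where "L = u t + (\<Sum>s\<in>A. mn s)"
  define H where "H = u t + (\<Sum>s\<in>A. mx s) + (\<Sum>j\<in>B-A. v j)"
  define \<beta> where "\<beta> = (\<Sum>s\<in>B. v s)"
  define \<theta> where "\<theta> = (if H \<le> \<Delta> then 1 else (\<Delta> - L)/(H - L))"
  have uA: "\<forall>s\<in>insert t A. 0 \<le> u s" "u t + (\<Sum>s\<in>A. u s) \<le> \<Delta>"
    using fu tA finA unfolding feas_def by auto
  have vB: "\<forall>s\<in>B. 0 \<le> v s" "\<beta> \<le> \<Delta>" using fv unfolding feas_def \<beta>_def by auto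
  have u_le: "u s \<le> \<Delta>" if "s \<in> insert t A" for s using feas_le[OF _ fu that] finA by auto
  have v_le: "v s \<le> \<Delta>" if "s \<in> B" for s using feas_le[OF fin fv that] .
  have splitB: "(\<Sum>s\<in>B. h s) = (\<Sum>s\<in>A. h s) + (\<Sum>s\<in>B-A. h s)" for h :: "nat \<Rightarrow> real"
    using sum.subset_diff[OF AB fin] by (simp add: add.commute)
  have L_le: "L \<le> \<Delta>"
  proof -
    have "(\<Sum>s\<in>A. mn s) \<le> (\<Sum>s\<in>A. u s)" unfolding mn_def by (intro sum_mono) auto
    then show ?thesis using uA unfolding L_def by linarith
  qed
  have H_ge: "\<beta> \<le> H"
  proof -
    have "(\<Sum>s\<in>A. v s) \<le> (\<Sum>s\<in>A. mx s)" unfolding mx_def by (intro sum_mono) auto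
    moreover have "0 \<le> u t" using uA by auto
    ultimately show ?thesis unfolding H_def \<beta>_def splitB[of v] by linarith
  qed
  have LH: "L \<le> H"
  proof -
    have "(\<Sum>s\<in>A. mn s) \<le> (\<Sum>s\<in>A. mx s)" unfolding mn_def mx_def by (intro sum_mono) auto
    moreover have "0 \<le> (\<Sum>j\<in>B-A. v j)" using vB by (intro sum_nonneg) auto
    ultimately show ?thesis unfolding L_def H_def by linarith
  qed
  have th: "0 \<le> \<theta>" "\<theta> \<le> 1" using L_le LH unfolding \<theta>_def by (auto simp: divide_simps)
  define bud where "bud = L + \<theta> * (H - L)"
  have bud: "\<beta> \<le> bud \<and> bud \<le> \<Delta>"
  proof (cases "H \<le> \<Delta>")
    case True then show ?thesis using H_ge unfolding bud_def \<theta>_def by auto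
  next
    case False
    then have "bud = \<Delta>" unfolding bud_def \<theta>_def using L_le by (auto simp: field_simps)
    then show ?thesis using vB by auto
  qed
  define a where "a s = mn s + \<theta> * (mx s - mn s)" for s
  define b where "b s = u s + v s - a s" for s
  define w where "w s = (if s = t then u t else if s \<in> A then a s else \<theta> * v s)" for s
  have a_nn: "0 \<le> a s" if "s \<in> A" for s
    using that uA vB AB th unfolding a_def mn_def mx_def by (auto intro!: add_nonneg_nonneg mult_nonneg_nonneg)
  have b_nn: "0 \<le> b s" if "s \<in> A" for s
  proof -
    have "b s = mx s - \<theta> * (mx s - mn s)" unfolding b_def a_def mn_def mx_def by (auto simp: min_def max_def)
    also have "\<dots> \<ge> mn s"
    proof -
      have d: "0 \<le> mx s - mn s" unfolding mn_def mx_def by auto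
      show ?thesis using mult_left_le_one_le[OF d th] by linarith
    qed
    moreover have "0 \<le> u s" "0 \<le> v s" using that uA vB AB by auto
    ultimately show ?thesis unfolding mn_def by linarith
  qed
  have sum_a: "(\<Sum>s\<in>A. a s) = (\<Sum>s\<in>A. mn s) + \<theta> * ((\<Sum>s\<in>A. mx s) - (\<Sum>s\<in>A. mn s))"
    unfolding a_def by (simp add: sum.distrib sum_distrib_left[symmetric] sum_subtractf)
  have bud_eq: "bud = u t + (\<Sum>s\<in>A. a s) + \<theta> * (\<Sum>j\<in>B-A. v j)"
    unfolding bud_def L_def H_def sum_a by (simp add: algebra_simps)
  have sum_b: "(\<Sum>s\<in>A. b s) = (\<Sum>s\<in>A. u s) + (\<Sum>s\<in>A. v s) - (\<Sum>s\<in>A. a s)"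
    unfolding b_def by (simp add: sum.distrib sum_subtractf)
  have vBA: "0 \<le> (\<Sum>j\<in>B-A. v j)" using vB by (intro sum_nonneg) auto
  have fb: "feas A \<Delta> b"
  proof -
    have "(\<Sum>s\<in>A. b s) \<le> \<Delta>"
    proof -
      have "(\<Sum>s\<in>A. b s) = (u t + (\<Sum>s\<in>A. u s)) + \<beta> - bud - (1 - \<theta>) * (\<Sum>j\<in>B-A. v j)"
        unfolding sum_b bud_eq \<beta>_def splitB[of v] by (simp add: algebra_simps)
      also have "\<dots> \<le> \<Delta>" using uA bud th vBA by (smt (verit) mult_nonneg_nonneg)
      finally show ?thesis .
    qed
    then show ?thesis unfolding feas_def using b_nn by auto
  qed
  have sum_w: "(\<Sum>s\<in>insert t B. w s) = bud"
  proof -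
    have "(\<Sum>s\<in>insert t B. w s) = u t + (\<Sum>s\<in>B. w s)" using tB fin unfolding w_def by simp
    also have "(\<Sum>s\<in>B. w s) = (\<Sum>s\<in>A. a s) + (\<Sum>s\<in>B-A. \<theta> * v s)"
      unfolding splitB[of w] using tB AB unfolding w_def by (intro arg_cong2[where f="(+)"] sum.cong) auto
    finally show ?thesis unfolding bud_eq by (simp add: sum_distrib_left)
  qed
  have fw: "feas (insert t B) \<Delta> w"
    unfolding feas_def sum_w using bud uA vB a_nn th by (auto simp: w_def)
  have concA: "(\<Sum>s\<in>A. f s (u s)) + (\<Sum>s\<in>A. f s (v s)) \<le> (\<Sum>s\<in>A. f s (a s)) + (\<Sum>s\<in>A. f s (b s))"
  proof -
    have "(\<Sum>s\<in>A. f s (u s) + f s (v s)) \<le> (\<Sum>s\<in>A. f s (a s) + f s (b s))"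
    proof (rule sum_mono)
      fix s assume s: "s \<in> A"
      show "f s (u s) + f s (v s) \<le> f s (a s) + f s (b s)"
        unfolding b_def a_def mn_def mx_def
        using conc_pair[of \<Delta> "f s" "u s" "v s" \<theta>] conc s uA u_le vB v_le AB th by auto
    qed
    then show ?thesis by (simp add: sum.distrib)
  qed
  have slopeJ: "(\<Sum>j\<in>B-A. f j (v j)) \<le> (\<Sum>j\<in>B-A. f j (\<theta> * v j)) + y * ((1-\<theta>) * (\<Sum>j\<in>B-A. v j))"
  proof -
    have "(\<Sum>j\<in>B-A. f j (v j)) \<le> (\<Sum>j\<in>B-A. f j (\<theta> * v j) + y * ((1-\<theta>) * v j))"
    proof (rule sum_mono)
      fix j assume j: "j \<in> B - A"
      have "f j (v j) - f j (\<theta> * v j) \<le> y * (v j - \<theta> * v j)"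
        using slope j vB v_le th mult_left_le_one_le[of "v j" \<theta>] by (auto intro!: mult_nonneg_nonneg)
      then show "f j (v j) \<le> f j (\<theta> * v j) + y * ((1-\<theta>) * v j)" by (simp add: algebra_simps)
    qed
    then show ?thesis by (simp add: sum.distrib sum_distrib_left)
  qed
  have valw: "val (insert t B) f 0 \<Delta> w = f t (u t) + (\<Sum>s\<in>A. f s (a s)) + (\<Sum>j\<in>B-A. f j (\<theta> * v j))"
  proof -
    have "(\<Sum>s\<in>insert t B. f s (w s)) = f t (u t) + (\<Sum>s\<in>B. f s (w s))" using tB fin unfolding w_def by simp
    also have "(\<Sum>s\<in>B. f s (w s)) = (\<Sum>s\<in>A. f s (a s)) + (\<Sum>s\<in>B-A. f s (\<theta> * v s))"
      unfolding splitB[of "\<lambda>s. f s (w s)"] using tB AB unfolding w_def by (intro arg_cong2[where f="(+)"] sum.cong) auto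
    finally show ?thesis unfolding val_def by simp
  qed
  have valu: "val (insert t A) f y \<Delta> u = f t (u t) + (\<Sum>s\<in>A. f s (u s)) + y * (\<Delta> - (u t + (\<Sum>s\<in>A. u s)))"
    unfolding val_def using tA finA by simp
  have valv: "val B f 0 \<Delta> v = (\<Sum>s\<in>A. f s (v s)) + (\<Sum>j\<in>B-A. f j (v j))"
    unfolding val_def splitB[of "\<lambda>s. f s (v s)"] by simp
  have valb: "val A f y \<Delta> b = (\<Sum>s\<in>A. f s (b s)) + y * (\<Delta> - (\<Sum>s\<in>A. b s))"
    unfolding val_def by simp
  have key: "y * (\<Delta> - (u t + (\<Sum>s\<in>A. u s))) + y * ((1-\<theta>) * (\<Sum>j\<in>B-A. v j)) \<le> y * (\<Delta> - (\<Sum>s\<in>A. b s))"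
  proof -
    have "y * (\<Delta> - (\<Sum>s\<in>A. b s)) - (y * (\<Delta> - (u t + (\<Sum>s\<in>A. u s))) + y * ((1-\<theta>) * (\<Sum>j\<in>B-A. v j)))
        = y * (bud - \<beta>)"
      unfolding sum_b bud_eq \<beta>_def splitB[of v] by (simp add: algebra_simps)
    also have "\<dots> \<ge> 0" using y bud by simp
    finally show ?thesis by linarith
  qed
  have "val (insert t A) f y \<Delta> u + val B f 0 \<Delta> v \<le> val A f y \<Delta> b + val (insert t B) f 0 \<Delta> w"
    unfolding valu valv valb valw using concA slopeJ key by linarith
  then show ?thesis using fb fw by blast
qed

lemma exch:
  assumes fin: "finite B" and AB: "A \<subseteq> B" and tB: "t \<notin> B" and y: "y \<ge> 0" and D: "\<Delta> \<ge> 0"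
    and mono: "\<forall>s\<in>insert t B. mono_on {0..\<Delta>} (f s)"
    and conc: "\<forall>s\<in>A. concave_on {0..\<Delta>} (f s)"
    and slope: "\<forall>j\<in>B-A. \<forall>a b. 0 \<le> a \<longrightarrow> a \<le> b \<longrightarrow> b \<le> \<Delta> \<longrightarrow> f j b - f j a \<le> y*(b-a)"
  shows "opt (insert t A) f y \<Delta> + opt B f 0 \<Delta> \<le> opt A f y \<Delta> + opt (insert t B) f 0 \<Delta>"
proof -
  let ?R = "opt A f y \<Delta> + opt (insert t B) f 0 \<Delta>"
  have finA: "finite A" using fin AB finite_subset by blast
  have pt: "val (insert t A) f y \<Delta> u + val B f 0 \<Delta> v \<le> ?R"
    if fu: "feas (insert t A) \<Delta> u" and fv: "feas B \<Delta> v" for u v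
  proof -
    obtain b w where bw: "feas A \<Delta> b" "feas (insert t B) \<Delta> w"
      "val (insert t A) f y \<Delta> u + val B f 0 \<Delta> v \<le> val A f y \<Delta> b + val (insert t B) f 0 \<Delta> w"
      using exch_pt[OF fin AB tB y conc slope fu fv] by blast
    have "val A f y \<Delta> b \<le> opt A f y \<Delta>" using opt_ge[OF finA _ y bw(1)] mono AB by auto
    moreover have "val (insert t B) f 0 \<Delta> w \<le> opt (insert t B) f 0 \<Delta>"
      using opt_ge[OF _ _ _ bw(2)] mono fin by auto
    ultimately show ?thesis using bw(3) by linarith
  qed
  have "val B f 0 \<Delta> v \<le> ?R - opt (insert t A) f y \<Delta>" if fv: "feas B \<Delta> v" for v
  proof -
    have "opt (insert t A) f y \<Delta> \<le> ?R - val B f 0 \<Delta> v"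
      using pt[OF _ fv] by (intro opt_le[OF D]) (auto simp: algebra_simps)
    then show ?thesis by linarith
  qed
  then have "opt B f 0 \<Delta> \<le> ?R - opt (insert t A) f y \<Delta>" by (intro opt_le[OF D])
  then show ?thesis by linarith
qed

lemma G_slope:
  assumes G: "in_G \<Delta> m M g" and p: "(g has_real_derivative p) (at 0 within {0..\<Delta>})"
    and D: "\<Delta> > 0" and ab: "0 \<le> a" "a \<le> b" "b \<le> \<Delta>"
  shows "g b - g a \<le> p * (b - a)"
proof (cases "a = b")
  case True then show ?thesis by simp
next
  case False
  then have ab': "a < b" using ab by simp
  have b0: "b > 0" using ab ab' by simp
  have conc: "concave_on {0..\<Delta>} g" using G unfolding in_G_def by simp
  have concb: "concave_on {0..b} g"
    using convex_on_subset[OF conc[unfolded concave_on_def], of "{0..b}"] ab unfolding concave_on_def by auto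
  define S where "S = (g b - g a) / (b - a)"
  have S1: "S \<le> (g b - g 0) / b"
  proof -
    have "g a \<ge> (g b - g 0) / (b - 0) * (a - 0) + g 0"
      using concave_onD_Icc'[OF concb, of a] ab by simp
    then have "g b - g a \<le> (g b - g 0) / b * (b - a)" using ab' ab by (simp add: field_simps)
    then show ?thesis unfolding S_def using ab' b0 by (simp add: divide_simps mult.commute)
  qed
  have S2: "S \<le> (g h - g 0) / (h - 0)" if h: "0 < h" "h < b" for h
  proof -
    have "g h \<ge> (g b - g 0) / (b - 0) * (h - 0) + g 0"
      using concave_onD_Icc'[OF concb, of h] h by simp
    then have "(g b - g 0) / b \<le> (g h - g 0) / h" using h by (simp add: field_simps)
    then show ?thesis using S1 by simp
  qed
  have lim: "((\<lambda>h. (g h - g 0) / (h - 0)) \<longlongrightarrow> p) (at 0 within {0..\<Delta>})"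
    using p unfolding has_field_derivative_iff .
  have ev: "eventually (\<lambda>h. S \<le> (g h - g 0) / (h - 0)) (at 0 within {0..\<Delta>})"
    unfolding eventually_at
  proof (intro exI[of _ b] conjI ballI impI)
    show "0 < b" using ab' ab by simp
  next
    fix h :: real assume "h \<in> {0..\<Delta>}" "h \<noteq> 0 \<and> dist h 0 < b"
    then show "S \<le> (g h - g 0) / (h - 0)" by (intro S2) (auto simp: dist_real_def)
  qed
  have nb: "at (0::real) within {0..\<Delta>} \<noteq> bot" using D by (simp add: at_within_Icc_at_right)
  have "S \<le> p" using tendsto_lowerbound[OF lim ev nb] .
  then show ?thesis unfolding S_def using ab' by (simp add: divide_simps mult.commute)
qed

definition FF :: "real \<Rightarrow> real \<Rightarrow> real \<Rightarrow> real" where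
  "FF m \<Delta> s = (if s \<le> m * \<Delta> then s / m else \<Delta> * (1 + ln (s / (m * \<Delta>))))"

lemma ln_lb: "(x::real) > 0 \<Longrightarrow> 1 - 1/x \<le> ln x"
  using ln_le_minus_one[of "1/x"] by (simp add: ln_div)

lemma FF_step:
  assumes m: "m > 0" and D: "\<Delta> > 0" and T0: "T0 \<ge> 0" and d: "d \<ge> 0" and P: "P \<ge> m"
    and S: "T0 + d \<le> P * \<Delta>"
  shows "FF m \<Delta> T0 + d / P \<le> FF m \<Delta> (T0 + d)"
proof -
  have P0: "P > 0" using m P by simp
  have dP: "d / P \<le> d / m" using d m P by (simp add: frac_le)
  show ?thesis
  proof (cases "T0 + d \<le> m * \<Delta>")
    case True
    then have "T0 \<le> m * \<Delta>" using d by linarith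
    then show ?thesis using True dP m unfolding FF_def by (simp add: add_divide_distrib)
  next
    case False
    define Sm where "Sm = T0 + d"
    have Spos: "Sm > 0" using False m D Sm_def by (smt (verit) mult_pos_pos)
    have key: "\<Delta> * (1 - (m*\<Delta>) / Sm) \<ge> (Sm - m*\<Delta>) / P"
    proof -
      have "\<Delta> * (1 - (m*\<Delta>) / Sm) = (Sm - m*\<Delta>) * (\<Delta> / Sm)" using Spos by (simp add: field_simps)
      moreover have "\<Delta> / Sm \<ge> 1 / P" using S Spos P0 D unfolding Sm_def by (simp add: field_simps)
      moreover have "Sm - m*\<Delta> \<ge> 0" using False Sm_def by simp
      ultimately show ?thesis by (smt (verit) mult_left_mono divide_inverse mult_1_right inverse_eq_divide)
    qed
    show ?thesis
    proof (cases "T0 \<le> m * \<Delta>")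
      case True
      have l: "ln (Sm / (m*\<Delta>)) \<ge> 1 - (m*\<Delta>) / Sm"
        using ln_lb[of "Sm / (m*\<Delta>)"] Spos m D by simp
      have "FF m \<Delta> (T0 + d) = \<Delta> * (1 + ln (Sm / (m * \<Delta>)))" using False unfolding FF_def Sm_def by simp
      moreover have "FF m \<Delta> T0 = T0 / m" using True unfolding FF_def by simp
      moreover have "\<Delta> - T0/m \<ge> (m*\<Delta> - T0) / P"
      proof -
        have "\<Delta> - T0/m = (m*\<Delta> - T0) / m" using m by (simp add: field_simps)
        moreover have "(m*\<Delta> - T0) / P \<le> (m*\<Delta> - T0) / m" using True m P by (intro divide_left_mono) auto
        ultimately show ?thesis by simp
      qed
      moreover have "\<Delta> * ln (Sm / (m * \<Delta>)) \<ge> \<Delta> * (1 - (m*\<Delta>) / Sm)" using l D by simp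
      moreover have "(m*\<Delta> - T0) / P + (Sm - m*\<Delta>) / P = d / P" unfolding Sm_def add_divide_distrib[symmetric] by simp
      ultimately show ?thesis using key by (simp add: algebra_simps)
    next
      case False2: False
      have T0p: "T0 > 0" using False2 m D by (smt (verit) mult_pos_pos)
      have e: "ln (Sm / (m*\<Delta>)) = ln (Sm / T0) + ln (T0 / (m*\<Delta>))"
        using T0p Spos m D by (simp add: ln_div)
      have l: "ln (Sm / T0) \<ge> 1 - T0 / Sm" using ln_lb[of "Sm / T0"] T0p Spos by simp
      have "1 - T0 / Sm = d / Sm" using Spos unfolding Sm_def by (simp add: field_simps)
      moreover have "\<Delta> * (d / Sm) \<ge> d / P"
      proof -
        have "\<Delta> / Sm \<ge> 1 / P" using S Spos P0 D unfolding Sm_def by (simp add: field_simps)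
        then have "d * (\<Delta> / Sm) \<ge> d * (1/P)" using d by (intro mult_left_mono) auto
        then show ?thesis by (simp add: mult.commute)
      qed
      ultimately have "\<Delta> * ln (Sm / T0) \<ge> d / P" using l D by (smt (verit) mult_left_mono)
      then show ?thesis using False False2 e unfolding FF_def Sm_def by (simp add: algebra_simps)
    qed
  qed
qed

lemma FF_bound:
  assumes m: "m > 0" "m \<le> M" and D: "\<Delta> > 0" and s: "0 \<le> s" "s \<le> M * \<Delta>"
  shows "FF m \<Delta> s \<le> \<Delta> * (ln (M / m) + 1)"
proof (cases "s \<le> m * \<Delta>")
  case True
  have "s / m \<le> \<Delta>" using True m by (simp add: field_simps)
  moreover have "ln (M/m) \<ge> 0" using m by simp
  ultimately show ?thesis using True D unfolding FF_def by (simp add: algebra_simps) (smt (verit) mult_nonneg_nonneg)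
next
  case False
  have sp: "s > 0" using False m D by (smt (verit) mult_pos_pos)
  have "s / (m * \<Delta>) \<le> M / m" using s m D by (simp add: field_simps)
  then have "ln (s / (m * \<Delta>)) \<le> ln (M / m)" using sp m D by (subst ln_le_cancel_iff) auto
  then show ?thesis using False D unfolding FF_def by (simp add: algebra_simps)
qed

lemma discrete:
  fixes I :: "nat set" and D p :: "nat \<Rightarrow> real"
  assumes fin: "finite I" and m: "m > 0" and Dl: "\<Delta> > 0"
  shows "(\<forall>i\<in>I. 0 \<le> D i \<and> m \<le> p i) \<longrightarrow> (\<forall>y\<ge>0. (\<Sum>i\<in>{i\<in>I. p i \<le> y}. D i) \<le> y * \<Delta>)
     \<longrightarrow> (\<Sum>i\<in>I. D i / p i) \<le> FF m \<Delta> (\<Sum>i\<in>I. D i)"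
  using fin
proof (induction I rule: finite_ranking_induct[where f = p])
  case empty
  then show ?case unfolding FF_def using m Dl by simp
next
  case (insert x S)
  show ?case
  proof (intro impI)
    assume h1: "\<forall>i\<in>insert x S. 0 \<le> D i \<and> m \<le> p i"
      and h2: "\<forall>y\<ge>0. (\<Sum>i\<in>{i\<in>insert x S. p i \<le> y}. D i) \<le> y * \<Delta>"
    show "(\<Sum>i\<in>insert x S. D i / p i) \<le> FF m \<Delta> (\<Sum>i\<in>insert x S. D i)"
    proof (cases "x \<in> S")
      case True
      then have "insert x S = S" by blast
      moreover have "(\<forall>y\<ge>0. (\<Sum>i\<in>{i\<in>S. p i \<le> y}. D i) \<le> y * \<Delta>)" using h2 True by (simp add: insert_absorb)
      ultimately show ?thesis using insert.IH h1 by simp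
    next
      case False
      have s1: "\<forall>i\<in>S. 0 \<le> D i \<and> m \<le> p i" using h1 by simp
      have s2: "(\<Sum>i\<in>{i\<in>S. p i \<le> y}. D i) \<le> y * \<Delta>" if "y \<ge> 0" for y
      proof -
        have "(\<Sum>i\<in>{i\<in>S. p i \<le> y}. D i) \<le> (\<Sum>i\<in>{i\<in>insert x S. p i \<le> y}. D i)"
          using h1 insert.hyps(1) by (intro sum_mono2) auto
        then show ?thesis using h2[rule_format, of y] that by linarith
      qed
      have IH: "(\<Sum>i\<in>S. D i / p i) \<le> FF m \<Delta> (\<Sum>i\<in>S. D i)" using insert.IH s1 s2 by blast
      have all: "{i\<in>insert x S. p i \<le> p x} = insert x S" using insert.hyps(2) by auto
      have tot: "(\<Sum>i\<in>S. D i) + D x \<le> p x * \<Delta>" using h2[rule_format, of "p x"] h1 m unfolding all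
        using False insert.hyps(1) by simp
      have step: "FF m \<Delta> (\<Sum>i\<in>S. D i) + D x / p x \<le> FF m \<Delta> ((\<Sum>i\<in>S. D i) + D x)"
        using FF_step[OF m Dl _ _ _ tot] h1 s1 by (auto intro: sum_nonneg)
      show ?thesis using IH step False insert.hyps(1) by (simp add: add.commute)
    qed
  qed
qed

lemma opt_empty: "\<Delta> \<ge> 0 \<Longrightarrow> opt {} f c \<Delta> = c * \<Delta>"
proof -
  assume D: "\<Delta> \<ge> 0"
  have "val {} f c \<Delta> ` {v. feas {} \<Delta> v} = {c * \<Delta>}"
    using D unfolding val_def feas_def by auto
  then show ?thesis unfolding opt_def by simp
qed

lemma insert_bounds:
  assumes fin: "finite S" and tS: "t \<notin> S" and D: "\<Delta> \<ge> 0"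
    and mono: "\<forall>s\<in>insert t S. mono_on {0..\<Delta>} (f s)" and f0: "f t 0 = 0"
  shows "opt S f 0 \<Delta> \<le> opt (insert t S) f 0 \<Delta>" "opt (insert t S) f 0 \<Delta> \<le> opt S f 0 \<Delta> + f t \<Delta>"
proof -
  show "opt S f 0 \<Delta> \<le> opt (insert t S) f 0 \<Delta>"
  proof (rule opt_le[OF D])
    fix v assume fv: "feas S \<Delta> v"
    define v' where "v' = v(t := 0)"
    have e1: "(\<Sum>s\<in>S. v' s) = (\<Sum>s\<in>S. v s)" "(\<Sum>s\<in>S. f s (v' s)) = (\<Sum>s\<in>S. f s (v s))"
      using tS unfolding v'_def by (auto intro!: sum.cong)
    have fv': "feas (insert t S) \<Delta> v'" using fv fin tS e1 unfolding feas_def by (auto simp: v'_def)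
    have "val S f 0 \<Delta> v = val (insert t S) f 0 \<Delta> v'"
      using fin tS e1 f0 unfolding val_def by (simp add: v'_def)
    also have "\<dots> \<le> opt (insert t S) f 0 \<Delta>" using opt_ge[OF _ mono _ fv'] fin by simp
    finally show "val S f 0 \<Delta> v \<le> opt (insert t S) f 0 \<Delta>" .
  qed
  show "opt (insert t S) f 0 \<Delta> \<le> opt S f 0 \<Delta> + f t \<Delta>"
  proof (rule opt_le[OF D])
    fix v assume fv: "feas (insert t S) \<Delta> v"
    have vt: "0 \<le> v t" "v t \<le> \<Delta>" using fv feas_le[OF _ fv] fin unfolding feas_def by auto
    have fvS: "feas S \<Delta> v" using fv fin tS vt unfolding feas_def by auto
    have "val S f 0 \<Delta> v \<le> opt S f 0 \<Delta>" using opt_ge[OF fin _ _ fvS] mono by simp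
    moreover have "f t (v t) \<le> f t \<Delta>" using mono vt D unfolding mono_on_def by auto
    ultimately show "val (insert t S) f 0 \<Delta> v \<le> opt S f 0 \<Delta> + f t \<Delta>"
      using fin tS unfolding val_def by simp
  qed
qed

lemma opt_dom:
  assumes fin: "finite B" and AB: "A \<subseteq> B" and y: "y \<ge> 0" and D: "\<Delta> \<ge> 0"
    and mono: "\<forall>s\<in>A. mono_on {0..\<Delta>} (f s)"
    and dom: "\<forall>j\<in>B-A. \<forall>x. 0 \<le> x \<longrightarrow> x \<le> \<Delta> \<longrightarrow> f j x \<le> y * x"
  shows "opt B f 0 \<Delta> \<le> opt A f y \<Delta>"
proof (rule opt_le[OF D])
  fix v assume fv: "feas B \<Delta> v"
  have finA: "finite A" using fin AB finite_subset by blast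
  have splitB: "(\<Sum>s\<in>B. h s) = (\<Sum>s\<in>A. h s) + (\<Sum>s\<in>B-A. h s)" for h :: "nat \<Rightarrow> real"
    using sum.subset_diff[OF AB fin] by (simp add: add.commute)
  have vnn: "\<forall>s\<in>B. 0 \<le> v s" and vs: "(\<Sum>s\<in>B. v s) \<le> \<Delta>" using fv unfolding feas_def by auto
  have J: "(\<Sum>j\<in>B-A. f j (v j)) \<le> (\<Sum>j\<in>B-A. y * v j)"
    using dom vnn feas_le[OF fin fv] by (intro sum_mono) auto
  have JA: "0 \<le> (\<Sum>j\<in>B-A. v j)" using vnn by (intro sum_nonneg) auto
  have fvA: "feas A \<Delta> v" using vnn vs AB JA unfolding feas_def splitB[of v] by auto
  have yy: "y * ((\<Sum>s\<in>A. v s) + (\<Sum>j\<in>B-A. v j)) \<le> y * \<Delta>"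
    using vs splitB[of v] y by (intro mult_left_mono) auto
  have J': "(\<Sum>j\<in>B-A. f j (v j)) \<le> y * (\<Sum>j\<in>B-A. v j)" using J by (simp add: sum_distrib_left)
  have yy2: "y * (\<Sum>s\<in>A. v s) + y * (\<Sum>j\<in>B-A. v j) \<le> y * \<Delta>" using yy by (simp add: distrib_left)
  have "val B f 0 \<Delta> v \<le> val A f y \<Delta> v"
    using J' yy2 unfolding val_def splitB[of v] splitB[of "\<lambda>s. f s (v s)"] right_diff_distrib mult_zero_left
    by linarith
  also have "\<dots> \<le> opt A f y \<Delta>" using opt_ge[OF finA mono y fvA] .
  finally show "val B f 0 \<Delta> v \<le> opt A f y \<Delta>" .
qed

lemma p_range:
  assumes G: "in_G \<Delta> m M g" and D: "\<Delta> > 0" and p: "(g has_real_derivative p) (at 0 within {0..\<Delta>})"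
  shows "m \<le> p" "p \<le> M"
proof -
  obtain d where d: "(g has_real_derivative d) (at 0 within {0..\<Delta>})" "m \<le> d" "d \<le> M"
    using G unfolding in_G_def by blast
  have nb: "at (0::real) within {0..\<Delta>} \<noteq> bot" using D by (simp add: at_within_Icc_at_right)
  have "p = d" using tendsto_unique[OF nb p[unfolded has_field_derivative_iff] d(1)[unfolded has_field_derivative_iff]] .
  then show "m \<le> p" "p \<le> M" using d by auto
qed

lemma cr_val:
  assumes G: "in_G \<Delta> m M g" and D: "\<Delta> > 0" and c: "0 \<le> c" "c \<le> g \<Delta>"
  shows "g (Inf {v \<in> {0..\<Delta>}. g v = c}) = c"
proof -
  have cont: "continuous_on {0..\<Delta>} g"
    using G unfolding in_G_def by (auto intro: differentiable_imp_continuous_on)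
  have g0: "g 0 = 0" using G unfolding in_G_def by simp
  obtain x where x: "0 \<le> x" "x \<le> \<Delta>" "g x = c" using IVT'[of g 0 c \<Delta>] cont c g0 D by auto
  let ?X = "{v \<in> {0..\<Delta>}. g v = c}"
  have ne: "?X \<noteq> {}" using x by auto
  have cl: "closed ?X" using continuous_closed_preimage_constant[OF cont] by simp
  have bb: "bdd_below ?X" by (rule bdd_belowI[of _ 0]) auto
  have "Inf ?X \<in> ?X" using closed_contains_Inf[OF ne bb cl] .
  then show ?thesis by simp
qed

lemma level:
  assumes D: "\<Delta> > 0" and y: "y \<ge> 0"
    and G: "\<forall>t\<in>{1..T}. in_G \<Delta> m M (g t)"
    and P: "\<forall>t\<in>{1..T}. (g t has_real_derivative p t) (at 0 within {0..\<Delta>})"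
  shows "(\<Sum>t\<in>{t\<in>{1..T}. p t \<le> y}. eta_OPT \<Delta> g t - eta_OPT \<Delta> g (t-1)) \<le> y * \<Delta>"
proof -
  define Aset where "Aset n = {s\<in>{1..n}. y < p s}" for n
  have claim: "n \<le> T \<Longrightarrow> (\<Sum>t\<in>{t\<in>{1..n}. p t \<le> y}. eta_OPT \<Delta> g t - eta_OPT \<Delta> g (t-1))
      \<le> opt {1..n} g 0 \<Delta> - opt (Aset n) g y \<Delta> + y * \<Delta>" for n
  proof (induction n)
    case 0
    have "Aset 0 = {}" unfolding Aset_def by auto
    then show ?case using opt_empty[of \<Delta> g 0] opt_empty[of \<Delta> g y] D by simp
  next
    case (Suc n)
    let ?t = "Suc n"
    have IH: "(\<Sum>t\<in>{t\<in>{1..n}. p t \<le> y}. eta_OPT \<Delta> g t - eta_OPT \<Delta> g (t-1))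
      \<le> opt {1..n} g 0 \<Delta> - opt (Aset n) g y \<Delta> + y * \<Delta>" using Suc by simp
    have ins: "{1..Suc n} = insert ?t {1..n}" by auto
    have Dt: "eta_OPT \<Delta> g ?t - eta_OPT \<Delta> g (?t - 1) = opt {1..Suc n} g 0 \<Delta> - opt {1..n} g 0 \<Delta>"
      by (simp add: eta_opt)
    show ?case
    proof (cases "p ?t \<le> y")
      case True
      have s: "{t\<in>{1..Suc n}. p t \<le> y} = insert ?t {t\<in>{1..n}. p t \<le> y}" using True by auto
      have a: "Aset (Suc n) = Aset n" using True unfolding Aset_def by (auto simp: le_Suc_eq)
      have "(\<Sum>t\<in>{t\<in>{1..Suc n}. p t \<le> y}. eta_OPT \<Delta> g t - eta_OPT \<Delta> g (t-1))
          = (eta_OPT \<Delta> g ?t - eta_OPT \<Delta> g (?t - 1)) + (\<Sum>t\<in>{t\<in>{1..n}. p t \<le> y}. eta_OPT \<Delta> g t - eta_OPT \<Delta> g (t-1))"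
        unfolding s by (subst sum.insert) auto
      then show ?thesis using IH Dt a by simp
    next
      case False
      have s: "{t\<in>{1..Suc n}. p t \<le> y} = {t\<in>{1..n}. p t \<le> y}" using False by (auto simp: le_Suc_eq)
      have a: "Aset (Suc n) = insert ?t (Aset n)" using False unfolding Aset_def by auto
      have AB: "Aset n \<subseteq> {1..n}" unfolding Aset_def by auto
      have ex: "opt (insert ?t (Aset n)) g y \<Delta> + opt {1..n} g 0 \<Delta> \<le> opt (Aset n) g y \<Delta> + opt (insert ?t {1..n}) g 0 \<Delta>"
      proof (rule exch[OF _ AB _ y])
        show "finite {1..n}" by simp
        show "?t \<notin> {1..n}" by simp
        show "0 \<le> \<Delta>" using D by simp
        show "\<forall>s\<in>insert ?t {1..n}. mono_on {0..\<Delta>} (g s)" using G Suc.prems unfolding in_G_def by auto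
        show "\<forall>s\<in>Aset n. concave_on {0..\<Delta>} (g s)" using G Suc.prems unfolding in_G_def Aset_def by auto
        show "\<forall>j\<in>{1..n} - Aset n. \<forall>a b. 0 \<le> a \<longrightarrow> a \<le> b \<longrightarrow> b \<le> \<Delta> \<longrightarrow> g j b - g j a \<le> y * (b - a)"
        proof (intro ballI allI impI)
          fix j a b assume j: "j \<in> {1..n} - Aset n" and ab: "0 \<le> a" "a \<le> b" "b \<le> \<Delta>"
          have jT: "j \<in> {1..T}" using j Suc.prems by auto
          have pj: "p j \<le> y" using j unfolding Aset_def by auto
          have "g j b - g j a \<le> p j * (b - a)" using G_slope[of \<Delta> m M "g j" "p j" a b] G P jT D ab by auto
          also have "\<dots> \<le> y * (b - a)" using pj ab by (intro mult_right_mono) auto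
          finally show "g j b - g j a \<le> y * (b - a)" .
        qed
      qed
      show ?thesis using IH ex unfolding s a ins[symmetric] by linarith
    qed
  qed
  have dom: "opt {1..T} g 0 \<Delta> \<le> opt (Aset T) g y \<Delta>"
  proof (rule opt_dom[OF _ _ y])
    show "finite {1..T}" by simp
    show "Aset T \<subseteq> {1..T}" unfolding Aset_def by auto
    show "0 \<le> \<Delta>" using D by simp
    show "\<forall>s\<in>Aset T. mono_on {0..\<Delta>} (g s)" using G unfolding in_G_def Aset_def by auto
    show "\<forall>j\<in>{1..T} - Aset T. \<forall>x. 0 \<le> x \<longrightarrow> x \<le> \<Delta> \<longrightarrow> g j x \<le> y * x"
    proof (intro ballI allI impI)
      fix j x assume j: "j \<in> {1..T} - Aset T" and x: "0 \<le> x" "x \<le> \<Delta>"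
      have pj: "p j \<le> y" using j unfolding Aset_def by auto
      have g0: "g j 0 = 0" using G j unfolding in_G_def by auto
      have "g j x - g j 0 \<le> p j * (x - 0)" using G_slope[of \<Delta> m M "g j" "p j" 0 x] G P j D x by auto
      also have "\<dots> \<le> y * x" using pj x by (simp add: mult_right_mono)
      finally show "g j x \<le> y * x" using g0 by simp
    qed
  qed
  show ?thesis using claim[of T] dom by simp
qed

theorem lemma11:
  fixes \<Delta> m M \<pi> :: real and T :: nat
    and g :: "nat \<Rightarrow> real \<Rightarrow> real" and p :: "nat \<Rightarrow> real"
  assumes "\<Delta> > 0" and "0 < m" and "m \<le> M" and "\<pi> \<ge> 1" and "T \<ge> 1"
    and "\<forall>t\<in>{1..T}. in_G \<Delta> m M (g t)"
    and "\<forall>t\<in>{1..T}. (g t has_real_derivative p t) (at 0 within {0..\<Delta>})"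
  shows "(\<Sum>t=1..T. g t (cr_pursuit \<Delta> \<pi> g t) / p t) \<le> \<Delta> / \<pi> * (ln (M / m) + 1)"
proof -
  note D = assms(1) and m = assms(2) and mM = assms(3) and pi = assms(4)
    and G = assms(6) and P = assms(7)
  define Dt where "Dt t = eta_OPT \<Delta> g t - eta_OPT \<Delta> g (t - 1)" for t
  have Dbounds: "0 \<le> Dt t \<and> Dt t \<le> g t \<Delta>" if t: "t \<in> {1..T}" for t
  proof -
    have ins: "{1..t} = insert t {1..t-1}" using t by auto
    have tn: "t \<notin> {1..t-1}" by auto
    have mono: "\<forall>s\<in>insert t {1..t-1}. mono_on {0..\<Delta>} (g s)"
      using G t unfolding in_G_def by auto
    have g0: "g t 0 = 0" using G t unfolding in_G_def by auto
    note ib = insert_bounds[OF _ tn _ mono g0]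
    show ?thesis using ib D unfolding Dt_def eta_opt ins[symmetric] by auto
  qed
  have prange: "m \<le> p t \<and> p t \<le> M" if t: "t \<in> {1..T}" for t
    using p_range[of \<Delta> m M "g t" "p t"] G P D t by auto
  have crv: "g t (cr_pursuit \<Delta> \<pi> g t) = Dt t / \<pi>" if t: "t \<in> {1..T}" for t
  proof -
    have "0 \<le> Dt t / \<pi>" using Dbounds[OF t] pi by simp
    moreover have "Dt t / \<pi> \<le> g t \<Delta>"
    proof -
      have "Dt t / \<pi> \<le> Dt t" using Dbounds[OF t] pi by (simp add: divide_le_eq mult_le_cancel_left1)
      then show ?thesis using Dbounds[OF t] by linarith
    qed
    ultimately show ?thesis
      unfolding cr_pursuit_def Dt_def[symmetric] using cr_val[of \<Delta> m M "g t" "Dt t / \<pi>"] G t D by auto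
  qed
  have sum_eq: "(\<Sum>t=1..T. g t (cr_pursuit \<Delta> \<pi> g t) / p t) = (\<Sum>t\<in>{1..T}. Dt t / p t) / \<pi>"
    unfolding sum_divide_distrib by (intro sum.cong) (auto simp: crv)
  have lev: "(\<Sum>t\<in>{t\<in>{1..T}. p t \<le> y}. Dt t) \<le> y * \<Delta>" if "y \<ge> 0" for y
    unfolding Dt_def using level[OF D that G P] .
  have disc: "(\<Sum>t\<in>{1..T}. Dt t / p t) \<le> FF m \<Delta> (\<Sum>t\<in>{1..T}. Dt t)"
    using discrete[of "{1..T}" m \<Delta> Dt p] m D Dbounds prange lev by auto
  have all: "{t\<in>{1..T}. p t \<le> M} = {1..T}" using prange by auto
  have tot: "(\<Sum>t\<in>{1..T}. Dt t) \<le> M * \<Delta>" using lev[of M] m mM unfolding all by simp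
  have tot0: "0 \<le> (\<Sum>t\<in>{1..T}. Dt t)" using Dbounds by (intro sum_nonneg) auto
  have "(\<Sum>t\<in>{1..T}. Dt t / p t) \<le> \<Delta> * (ln (M / m) + 1)"
    using disc FF_bound[OF m mM D tot0 tot] by linarith
  then have "(\<Sum>t\<in>{1..T}. Dt t / p t) / \<pi> \<le> \<Delta> * (ln (M / m) + 1) / \<pi>"
    using pi by (intro divide_right_mono) auto
  then show ?thesis unfolding sum_eq by simp
qed

end
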